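(* Let $T$ be a tree, $c:V(T)\to\mathbb{R}_{>0}$, and let $T'$ be a subtree of $T$ (with costs given by the restriction of $c$). Then $k(T',c)\le k(T,c)$.
   Context: For a tree $T$ with costs $c:V(T)\to\mathbb{R}_{>0}$ and $t\ge 0$, a heavy module with respect to $t$ is a set $H\subseteq V(T)$ such that $T[H]$ is connected, $c(v)>t$ for all $v\in H$, and $H$ is maximal with these properties. $k(T,c,t)$ is the number of heavy modules with respect to $t$, and $k(T,c)=\max_{t\ge 0}k(T,c,t)$. *)

theory Defs
  imports Complex_Main
begin

definition simple_graph :: "'a set \<Rightarrow> ('a \<Rightarrow> 'a \<Rightarrow> bool) \<Rightarrow> bool" where
  "simple_graph V E \<longleftrightarrow> finite V \<and> (\<forall>x y. E x y \<longrightarrow> x \<in> V \<and> y \<in> V)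
     \<and> (\<forall>x y. E x y \<longrightarrow> E y x) \<and> (\<forall>x. \<not> E x x)"

definition connected_on :: "('a \<Rightarrow> 'a \<Rightarrow> bool) \<Rightarrow> 'a set \<Rightarrow> bool" where
  "connected_on E S \<longleftrightarrow> S \<noteq> {} \<and>
     (\<forall>x\<in>S. \<forall>y\<in>S. (\<lambda>a b. a \<in> S \<and> b \<in> S \<and> E a b)\<^sup>*\<^sup>* x y)"

definition is_cycle :: "('a \<Rightarrow> 'a \<Rightarrow> bool) \<Rightarrow> 'a list \<Rightarrow> bool" where
  "is_cycle E vs \<longleftrightarrow> length vs \<ge> 3 \<and> distinct vs
     \<and> (\<forall>i. Suc i < length vs \<longrightarrow> E (vs ! i) (vs ! Suc i))
     \<and> E (last vs) (hd vs)"

definition tree :: "'a set \<Rightarrow> ('a \<Rightarrow> 'a \<Rightarrow> bool) \<Rightarrow> bool" where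
  "tree V E \<longleftrightarrow> simple_graph V E \<and> connected_on E V \<and> (\<nexists>vs. is_cycle E vs)"

definition induced :: "'a set \<Rightarrow> ('a \<Rightarrow> 'a \<Rightarrow> bool) \<Rightarrow> 'a \<Rightarrow> 'a \<Rightarrow> bool" where
  "induced V' E = (\<lambda>x y. x \<in> V' \<and> y \<in> V' \<and> E x y)"

definition heavy_module ::
  "'a set \<Rightarrow> ('a \<Rightarrow> 'a \<Rightarrow> bool) \<Rightarrow> ('a \<Rightarrow> real) \<Rightarrow> real \<Rightarrow> 'a set \<Rightarrow> bool" where
  "heavy_module V E c t H \<longleftrightarrow>
     (H \<subseteq> V \<and> connected_on E H \<and> (\<forall>v\<in>H. c v > t)) \<and>
     (\<forall>H'. H \<subseteq> H' \<and> H' \<subseteq> V \<and> connected_on E H' \<and> (\<forall>v\<in>H'. c v > t) \<longrightarrow> H' = H)"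

definition k_t :: "'a set \<Rightarrow> ('a \<Rightarrow> 'a \<Rightarrow> bool) \<Rightarrow> ('a \<Rightarrow> real) \<Rightarrow> real \<Rightarrow> nat" where
  "k_t V E c t = card {H. heavy_module V E c t H}"

definition k_max :: "'a set \<Rightarrow> ('a \<Rightarrow> 'a \<Rightarrow> bool) \<Rightarrow> ('a \<Rightarrow> real) \<Rightarrow> nat" where
  "k_max V E c = Max (k_t V E c ` {t. t \<ge> 0})"

end

theory Submission
  imports Defs
begin

fun walk :: "('a \<Rightarrow> 'a \<Rightarrow> bool) \<Rightarrow> 'a list \<Rightarrow> bool" where
  "walk E [] = True"
| "walk E [x] = True"
| "walk E (x # y # xs) = (E x y \<and> walk E (y # xs))"

lemma walk_Cons: "walk E (x # ys) \<longleftrightarrow> walk E ys \<and> (ys \<noteq> [] \<longrightarrow> E x (hd ys))"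
  by (cases ys) auto

lemma walk_nth: "walk E xs \<longleftrightarrow> (\<forall>i. Suc i < length xs \<longrightarrow> E (xs ! i) (xs ! Suc i))"
proof (induction E xs rule: walk.induct)
  case (3 E x y xs)
  show ?case
  proof
    assume "walk E (x # y # xs)"
    then have a: "E x y" and b: "\<forall>i. Suc i < length (y # xs) \<longrightarrow> E ((y # xs) ! i) ((y # xs) ! Suc i)"
      using 3 by auto
    show "\<forall>i. Suc i < length (x # y # xs) \<longrightarrow> E ((x # y # xs) ! i) ((x # y # xs) ! Suc i)"
    proof (intro allI impI)
      fix i assume "Suc i < length (x # y # xs)"
      then show "E ((x # y # xs) ! i) ((x # y # xs) ! Suc i)"
        using a b by (cases i) auto
    qed
  next
    assume H: "\<forall>i. Suc i < length (x # y # xs) \<longrightarrow> E ((x # y # xs) ! i) ((x # y # xs) ! Suc i)"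
    have "E x y" using H[rule_format, of 0] by simp
    moreover have "\<forall>i. Suc i < length (y # xs) \<longrightarrow> E ((y # xs) ! i) ((y # xs) ! Suc i)"
    proof (intro allI impI)
      fix i assume "Suc i < length (y # xs)"
      then show "E ((y # xs) ! i) ((y # xs) ! Suc i)" using H[rule_format, of "Suc i"] by simp
    qed
    ultimately show "walk E (x # y # xs)" using 3 by simp
  qed
qed auto

lemma walk_append: "walk E (xs @ ys) \<longleftrightarrow> walk E xs \<and> walk E ys \<and> (xs \<noteq> [] \<and> ys \<noteq> [] \<longrightarrow> E (last xs) (hd ys))"
  by (induction E xs rule: walk.induct) (auto simp: walk_Cons)

lemma walk_rev: "\<forall>a b. E a b \<longrightarrow> E b a \<Longrightarrow> walk E xs \<Longrightarrow> walk E (rev xs)"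
  by (induction xs) (auto simp: walk_append walk_Cons last_rev)

lemma walk_rtranclp: "walk E xs \<Longrightarrow> xs \<noteq> [] \<Longrightarrow> set xs \<subseteq> S \<Longrightarrow>
   (\<lambda>a b. a \<in> S \<and> b \<in> S \<and> E a b)\<^sup>*\<^sup>* (hd xs) (last xs)"
proof (induction xs)
  case Nil then show ?case by simp
next
  case (Cons x xs)
  show ?case
  proof (cases "xs = []")
    case True then show ?thesis by simp
  next
    case False
    then have "(\<lambda>a b. a \<in> S \<and> b \<in> S \<and> E a b)\<^sup>*\<^sup>* (hd xs) (last xs)"
      using Cons by (auto simp: walk_Cons)
    moreover have "x \<in> S \<and> hd xs \<in> S \<and> E x (hd xs)" using Cons False by (auto simp: walk_Cons)
    ultimately show ?thesis using False
      by (auto intro: converse_rtranclp_into_rtranclp[where r="\<lambda>a b. a \<in> S \<and> b \<in> S \<and> E a b"])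
  qed
qed

lemma rtranclp_walk:
  assumes "(\<lambda>a b. a \<in> S \<and> b \<in> S \<and> E a b)\<^sup>*\<^sup>* x y" "x \<in> S"
  shows "\<exists>xs. distinct xs \<and> xs \<noteq> [] \<and> hd xs = x \<and> last xs = y \<and> set xs \<subseteq> S \<and> walk E xs"
  using assms
proof (induction rule: rtranclp_induct)
  case base
  then show ?case by (intro exI[of _ "[x]"]) auto
next
  case (step y z)
  then obtain xs where xs: "distinct xs" "xs \<noteq> []" "hd xs = x" "last xs = y" "set xs \<subseteq> S" "walk E xs"
    by blast
  show ?case
  proof (cases "z \<in> set xs")
    case True
    then obtain as bs where ab: "xs = as @ z # bs" by (meson split_list)
    have "walk E (as @ [z])" using xs(6) unfolding ab by (auto simp: walk_append walk_Cons)
    moreover have "hd (as @ [z]) = x" using xs(3) ab by (cases as) auto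
    ultimately show ?thesis using xs ab by (intro exI[of _ "as @ [z]"]) auto
  next
    case False
    then show ?thesis using xs step
      by (intro exI[of _ "xs @ [z]"]) (auto simp: walk_append)
  qed
qed

lemma unique_walk:
  assumes sym: "\<forall>a b. E a b \<longrightarrow> E b a" and acyc: "\<nexists>vs. is_cycle E vs"
  shows "walk E xs \<Longrightarrow> walk E ys \<Longrightarrow> distinct xs \<Longrightarrow> distinct ys \<Longrightarrow> xs \<noteq> [] \<Longrightarrow> ys \<noteq> []
    \<Longrightarrow> hd xs = hd ys \<Longrightarrow> last xs = last ys \<Longrightarrow> xs = ys"
proof (induction xs arbitrary: ys)
  case Nil then show ?case by simp
next
  case (Cons x xs')
  obtain ys' where ys: "ys = x # ys'" using Cons.prems by (cases ys) auto
  show ?case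
  proof (cases "xs' = []")
    case True
    show ?thesis
    proof (rule ccontr)
      assume "x # xs' \<noteq> ys"
      then have "ys' \<noteq> []" using True ys by auto
      then show False using Cons.prems True ys by auto
    qed
  next
    case False
    have ys'ne: "ys' \<noteq> []"
    proof
      assume "ys' = []"
      then show False using Cons.prems False ys by auto
    qed
    show ?thesis
    proof (cases "hd xs' = hd ys'")
      case True
      have "xs' = ys'"
        using Cons.IH[of ys'] Cons.prems False ys'ne True ys by (auto simp: walk_Cons)
      then show ?thesis using ys by simp
    next
      case hne: False
      have "last xs' = last ys'" using Cons.prems False ys'ne ys by auto
      then have "\<exists>z\<in>set xs'. z \<in> set ys'" using False ys'ne last_in_set by metis
      then obtain as z bs where xs'_eq: "xs' = as @ z # bs" and zin: "z \<in> set ys'"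
        and asn: "\<forall>w\<in>set as. w \<notin> set ys'"
        using split_list_first_prop[of xs' "\<lambda>w. w \<in> set ys'"] by blast
      obtain cs ds where ys'_eq: "ys' = cs @ z # ds" using zin by (meson split_list)
      define cyc where "cyc = x # as @ z # rev cs"
      have len: "as \<noteq> [] \<or> cs \<noteq> []" using hne xs'_eq ys'_eq by auto
      have dx: "distinct (x # xs')" "distinct ys" by fact+
      have dist: "distinct cyc" using dx asn unfolding cyc_def xs'_eq ys ys'_eq by auto
      have w1: "walk E (x # xs')" "walk E ys" by fact+
      have wxs: "walk E as" "as \<noteq> [] \<longrightarrow> E (last as) z" "E x (hd (as @ [z]))"
        using w1(1) unfolding xs'_eq by (cases as; auto simp: walk_append walk_Cons)+
      have wys: "walk E cs" "cs \<noteq> [] \<longrightarrow> E (last cs) z" "E x (hd (cs @ [z]))"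
        using w1(2) unfolding ys ys'_eq by (cases cs; auto simp: walk_append walk_Cons)+
      have wrc: "walk E (rev cs)" using walk_rev[OF sym wys(1)] .
      have wzc: "walk E (z # rev cs)" using wrc wys(2) sym by (simp add: walk_Cons hd_rev)
      have wac: "walk E (as @ z # rev cs)" using wzc wxs(1,2) by (simp add: walk_append)
      have "hd (as @ z # rev cs) = hd (as @ [z])" by (cases as) simp_all
      then have "walk E cyc" unfolding cyc_def using wac wxs(3) by (simp add: walk_Cons)
      moreover have "E (last cyc) (hd cyc)"
      proof (cases cs)
        case Nil then show ?thesis using wys(3) sym unfolding cyc_def by simp
      next
        case (Cons c cs') then show ?thesis using wys(3) sym unfolding cyc_def by simp
      qed
      moreover have "length cyc \<ge> 3" 
      proof -
        have "length as + length cs \<ge> 1" using len by (metis One_nat_def Suc_leI add_gr_0 length_greater_0_conv)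
        then show ?thesis unfolding cyc_def by simp
      qed
      ultimately have "is_cycle E cyc" using dist unfolding is_cycle_def walk_nth[symmetric]
        by (intro conjI) blast+
      then show ?thesis using acyc by blast
    qed
  qed
qed


lemma conn_inter:
  assumes sym: "\<forall>a b. E a b \<longrightarrow> E b a" and acyc: "\<nexists>vs. is_cycle E vs"
    and cA: "\<forall>x\<in>A. \<forall>y\<in>A. (\<lambda>a b. a \<in> A \<and> b \<in> A \<and> E a b)\<^sup>*\<^sup>* x y"
    and cB: "\<forall>x\<in>B. \<forall>y\<in>B. (\<lambda>a b. a \<in> B \<and> b \<in> B \<and> E a b)\<^sup>*\<^sup>* x y"
    and x: "x \<in> A \<inter> B" and y: "y \<in> A \<inter> B"
  shows "(\<lambda>a b. a \<in> A \<inter> B \<and> b \<in> A \<inter> B \<and> E a b)\<^sup>*\<^sup>* x y"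
proof -
  obtain p where p: "distinct p" "p \<noteq> []" "hd p = x" "last p = y" "set p \<subseteq> A" "walk E p"
    using rtranclp_walk[of A E x y] cA x y by blast
  obtain q where q: "distinct q" "q \<noteq> []" "hd q = x" "last q = y" "set q \<subseteq> B" "walk E q"
    using rtranclp_walk[of B E x y] cB x y by blast
  have "p = q" using unique_walk[OF sym acyc p(6) q(6) p(1) q(1) p(2) q(2)] p q by simp
  then have "set p \<subseteq> A \<inter> B" using p q by auto
  from walk_rtranclp[OF p(6) p(2) this] show ?thesis using p by simp
qed

lemma conn_induced:
  assumes "H \<subseteq> V'"
  shows "connected_on (induced V' E) H \<longleftrightarrow> connected_on E H"
proof -
  have "(\<lambda>a b. a \<in> H \<and> b \<in> H \<and> induced V' E a b) = (\<lambda>a b. a \<in> H \<and> b \<in> H \<and> E a b)"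
    using assms unfolding induced_def by (intro ext) auto
  then show ?thesis unfolding connected_on_def by simp
qed

lemma hm_D: "heavy_module V E c t H \<Longrightarrow> H \<subseteq> V \<and> connected_on E H \<and> (\<forall>v\<in>H. c v > t)"
  unfolding heavy_module_def by blast

lemma exists_max:
  assumes fin: "finite V" and H: "H \<subseteq> V" "connected_on E H" "\<forall>v\<in>H. c v > t"
  shows "\<exists>K. heavy_module V E c t K \<and> H \<subseteq> K"
proof -
  define P where "P K \<longleftrightarrow> H \<subseteq> K \<and> K \<subseteq> V \<and> connected_on E K \<and> (\<forall>v\<in>K. c v > t)" for K
  have "P H" using H unfolding P_def by auto
  moreover have "\<forall>K. P K \<longrightarrow> card K < Suc (card V)"
    using fin unfolding P_def by (auto simp: le_imp_less_Suc card_mono)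
  ultimately obtain K where K: "P K" and Kmax: "\<forall>K'. P K' \<longrightarrow> card K' \<le> card K"
    using ex_has_greatest_nat[of P H card "Suc (card V)"] by blast
  have "heavy_module V E c t K"
    unfolding heavy_module_def
  proof (intro conjI allI impI)
    show "K \<subseteq> V" "connected_on E K" "\<forall>v\<in>K. c v > t" using K unfolding P_def by auto
  next
    fix H' assume a: "K \<subseteq> H' \<and> H' \<subseteq> V \<and> connected_on E H' \<and> (\<forall>v\<in>H'. t < c v)"
    then have "P H'" using K unfolding P_def by auto
    then have "card H' \<le> card K" using Kmax by blast
    moreover have "finite H'" using a fin finite_subset by blast
    ultimately show "H' = K" using a card_subset_eq[of H' K] card_mono[of H' K] by (metis antisym card_mono)
  qed
  then show ?thesis using K unfolding P_def by auto
qed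

lemma kt_mono:
  fixes V V' :: "'a set" and E :: "'a \<Rightarrow> 'a \<Rightarrow> bool" and c :: "'a \<Rightarrow> real"
  assumes T: "tree V E" and sub: "V' \<subseteq> V" and T': "tree V' (induced V' E)"
  shows "k_t V' (induced V' E) c t \<le> k_t V E c t"
proof -
  have fin: "finite V" and sym: "\<forall>a b. E a b \<longrightarrow> E b a" and acyc: "\<nexists>vs. is_cycle E vs"
    using T unfolding tree_def simple_graph_def by blast+
  have cV': "connected_on E V'" using T' conn_induced[of V' V' E] unfolding tree_def by auto
  define M' where "M' = {H. heavy_module V' (induced V' E) c t H}"
  define M where "M = {H. heavy_module V E c t H}"
  define f where "f H = (SOME K. heavy_module V E c t K \<and> H \<subseteq> K)" for H
  have fH: "heavy_module V E c t (f H) \<and> H \<subseteq> f H" if "H \<in> M'" for H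
  proof -
    have "H \<subseteq> V'" "connected_on (induced V' E) H" "\<forall>v\<in>H. c v > t"
      using that hm_D unfolding M'_def mem_Collect_eq by blast+
    then have "\<exists>K. heavy_module V E c t K \<and> H \<subseteq> K"
      using exists_max[OF fin, where H=H and E=E and c=c and t=t] sub conn_induced[of H V' E] by auto
    then show ?thesis unfolding f_def by (rule someI_ex)
  qed
  have key: "K \<inter> V' = H" if H: "H \<in> M'" and K: "heavy_module V E c t K" "H \<subseteq> K" for H K
  proof -
    have HV': "H \<subseteq> V'" and Hc: "connected_on (induced V' E) H"
      and Hmax: "\<forall>H'. H \<subseteq> H' \<and> H' \<subseteq> V' \<and> connected_on (induced V' E) H' \<and> (\<forall>v\<in>H'. c v > t) \<longrightarrow> H' = H"
      using H unfolding M'_def mem_Collect_eq heavy_module_def by blast+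
    have Kc: "connected_on E K" and Kh: "\<forall>v\<in>K. c v > t" using hm_D[OF K(1)] by blast+
    have "H \<noteq> {}" using Hc unfolding connected_on_def by auto
    then have ne: "K \<inter> V' \<noteq> {}" using HV' K(2) by auto
    have "connected_on E (K \<inter> V')"
      unfolding connected_on_def
      using ne conn_inter[OF sym acyc, of K V'] Kc cV' unfolding connected_on_def by blast
    then have "connected_on (induced V' E) (K \<inter> V')" using conn_induced[of "K \<inter> V'" V' E] by auto
    then show ?thesis using Hmax HV' K(2) Kh by (metis Int_iff Int_lower2 le_inf_iff)
  qed
  have inj: "inj_on f M'"
  proof (rule inj_onI)
    fix H1 H2 assume a: "H1 \<in> M'" "H2 \<in> M'" "f H1 = f H2"
    have "f H1 \<inter> V' = H1" using key[OF a(1)] fH[OF a(1)] by blast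
    moreover have "f H2 \<inter> V' = H2" using key[OF a(2)] fH[OF a(2)] by blast
    ultimately show "H1 = H2" using a(3) by metis
  qed
  have img: "f ` M' \<subseteq> M" using fH unfolding M_def by auto
  have "M \<subseteq> Pow V" unfolding M_def using hm_D by blast
  then have "finite M" using fin finite_subset by blast
  then have "card M' \<le> card M" using card_inj_on_le[OF inj img] by blast
  then show ?thesis unfolding k_t_def M_def M'_def .
qed

lemma kt_bound:
  assumes "finite V"
  shows "k_t V E c t \<le> card (Pow V)"
proof -
  have "{H. heavy_module V E c t H} \<subseteq> Pow V" using hm_D by blast
  then show ?thesis unfolding k_t_def using assms by (simp add: card_mono)
qed

theorem mainTheorem2:
  fixes V V' :: "'a set" and E :: "'a \<Rightarrow> 'a \<Rightarrow> bool" and c :: "'a \<Rightarrow> real"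
  assumes "tree V E"
    and "\<forall>v\<in>V. c v > 0"
    and "V' \<subseteq> V"
    and "tree V' (induced V' E)"
  shows "k_max V' (induced V' E) c \<le> k_max V E c"
proof -
  have fin: "finite V" using assms(1) unfolding tree_def simple_graph_def by blast
  have fin': "finite V'" using fin assms(3) finite_subset by blast
  define S where "S = {t::real. t \<ge> 0}"
  have S0: "0 \<in> S" unfolding S_def by simp
  have F: "finite (k_t V E c ` S)"
    by (rule finite_subset[OF _ finite_atMost[of "card (Pow V)"]]) (intro image_subsetI, simp add: kt_bound[OF fin] del: card_Pow)
  have F': "finite (k_t V' (induced V' E) c ` S)"
    by (rule finite_subset[OF _ finite_atMost[of "card (Pow V')"]]) (intro image_subsetI, simp add: kt_bound[OF fin'] del: card_Pow)
  have "Max (k_t V' (induced V' E) c ` S) \<in> k_t V' (induced V' E) c ` S"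
    using F' S0 by (intro Max_in) auto
  then obtain t0 where t0: "t0 \<in> S" "Max (k_t V' (induced V' E) c ` S) = k_t V' (induced V' E) c t0"
    by auto
  have "k_t V' (induced V' E) c t0 \<le> k_t V E c t0"
    using kt_mono[OF assms(1) assms(3) assms(4)] .
  also have "\<dots> \<le> Max (k_t V E c ` S)" using F t0(1) by (intro Max_ge) auto
  finally show ?thesis unfolding k_max_def S_def[symmetric] using t0(2) by simp
qed

end
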